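(* Let $P$ be a finite graded poset with rank function $\operatorname{rk}$. Then $\mathsf{Z}_{P,\operatorname{rk}}$ is entirely determined by the flag $f$-vector of $P$: if $P'$ is another finite graded poset such that for every finite strictly increasing sequence $a=(a_1<\cdots<a_k)$ of nonnegative integers the number of strict chains $c_1<\cdots<c_k$ in $P$ with $(\operatorname{rk}(c_1),\dots,\operatorname{rk}(c_k))=a$ equals the corresponding number for $P'$, then $\mathsf{Z}_{P,\operatorname{rk}}=\mathsf{Z}_{P',\operatorname{rk}}$.
   Context: $q$ is an indeterminate; $[n]_q=(q^n-1)/(q-1)$. A poset is graded if it has a height function increasing by exactly $1$ along every cover relation; $\operatorname{rk}$ is such a function with minimum value $0$ on each connected component. For a finite poset $P$ with height function $h$ ($h(x)<h(y)$ when $y$ covers $x$), the $q$-Zeta polynomial $\mathsf{Z}_{P,h}\in\mathbb{Q}(q)[x]$ is the unique polynomial with $\mathsf{Z}_{P,h}([n]_q)=\sum_{e_1\le\cdots\le e_{n-1}\text{ in }P}q^{h(e_1)+\cdots+h(e_{n-1})}$ for all $n\ge2$ (it exists). *)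

theory Defs
  imports "HOL-Computational_Algebra.Polynomial" "HOL-Computational_Algebra.Fraction_Field"
begin

definition is_poset :: "'a set \<Rightarrow> ('a \<Rightarrow> 'a \<Rightarrow> bool) \<Rightarrow> bool" where
  "is_poset P le \<longleftrightarrow>
     (\<forall>x\<in>P. le x x) \<and>
     (\<forall>x\<in>P. \<forall>y\<in>P. le x y \<and> le y x \<longrightarrow> x = y) \<and>
     (\<forall>x\<in>P. \<forall>y\<in>P. \<forall>z\<in>P. le x y \<and> le y z \<longrightarrow> le x z)"

definition lt_on :: "('a \<Rightarrow> 'a \<Rightarrow> bool) \<Rightarrow> 'a \<Rightarrow> 'a \<Rightarrow> bool" where
  "lt_on le x y \<longleftrightarrow> le x y \<and> x \<noteq> y"

definition covers :: "'a set \<Rightarrow> ('a \<Rightarrow> 'a \<Rightarrow> bool) \<Rightarrow> 'a \<Rightarrow> 'a \<Rightarrow> bool" where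
  "covers P le x y \<longleftrightarrow> x \<in> P \<and> y \<in> P \<and> lt_on le x y \<and>
     \<not> (\<exists>z\<in>P. lt_on le x z \<and> lt_on le z y)"

definition is_height :: "'a set \<Rightarrow> ('a \<Rightarrow> 'a \<Rightarrow> bool) \<Rightarrow> ('a \<Rightarrow> nat) \<Rightarrow> bool" where
  "is_height P le h \<longleftrightarrow> (\<forall>x y. covers P le x y \<longrightarrow> h x < h y)"

definition graded :: "'a set \<Rightarrow> ('a \<Rightarrow> 'a \<Rightarrow> bool) \<Rightarrow> bool" where
  "graded P le \<longleftrightarrow> (\<exists>h :: 'a \<Rightarrow> int. \<forall>x y. covers P le x y \<longrightarrow> h y = h x + 1)"

definition connected_in :: "'a set \<Rightarrow> ('a \<Rightarrow> 'a \<Rightarrow> bool) \<Rightarrow> 'a \<Rightarrow> 'a \<Rightarrow> bool" where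
  "connected_in P le = (\<lambda>x y. x \<in> P \<and> y \<in> P \<and> (le x y \<or> le y x))\<^sup>*\<^sup>*"

text \<open>rk: increases by exactly 1 along covers, and has minimum value 0 on every
  connected component (values are natural numbers, so the minimum is 0 iff some
  element of the component has rank 0).\<close>
definition is_rank_fun :: "'a set \<Rightarrow> ('a \<Rightarrow> 'a \<Rightarrow> bool) \<Rightarrow> ('a \<Rightarrow> nat) \<Rightarrow> bool" where
  "is_rank_fun P le rk \<longleftrightarrow>
     (\<forall>x y. covers P le x y \<longrightarrow> rk y = rk x + 1) \<and>
     (\<forall>x\<in>P. \<exists>y\<in>P. connected_in P le x y \<and> rk y = 0)"

type_synonym qfield = "rat poly fract"

definition qvar :: qfield where "qvar = Fract [:0, 1:] 1"

definition qint :: "nat \<Rightarrow> qfield" where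
  "qint n = (qvar ^ n - 1) / (qvar - 1)"

definition multichains :: "'a set \<Rightarrow> ('a \<Rightarrow> 'a \<Rightarrow> bool) \<Rightarrow> nat \<Rightarrow> 'a list set" where
  "multichains P le m = {es. length es = m \<and> set es \<subseteq> P \<and>
       (\<forall>i. Suc i < m \<longrightarrow> le (es ! i) (es ! Suc i))}"

definition is_qZeta :: "'a set \<Rightarrow> ('a \<Rightarrow> 'a \<Rightarrow> bool) \<Rightarrow> ('a \<Rightarrow> nat) \<Rightarrow> qfield poly \<Rightarrow> bool" where
  "is_qZeta P le h Z \<longleftrightarrow>
     (\<forall>n\<ge>2. poly Z (qint n) = (\<Sum>es\<in>multichains P le (n - 1). qvar ^ sum_list (map h es)))"

definition qZeta :: "'a set \<Rightarrow> ('a \<Rightarrow> 'a \<Rightarrow> bool) \<Rightarrow> ('a \<Rightarrow> nat) \<Rightarrow> qfield poly" where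
  "qZeta P le h = (THE Z. is_qZeta P le h Z)"

definition flag_f :: "'a set \<Rightarrow> ('a \<Rightarrow> 'a \<Rightarrow> bool) \<Rightarrow> ('a \<Rightarrow> nat) \<Rightarrow> nat list \<Rightarrow> nat" where
  "flag_f P le rk a = card {cs. length cs = length a \<and> set cs \<subseteq> P \<and>
       sorted_wrt (lt_on le) cs \<and> map rk cs = a}"

end

theory Submission
  imports Defs
begin

lemma remdups_adj_map_inj_on:
  "inj_on f (set xs) \<Longrightarrow> remdups_adj (map f xs) = map f (remdups_adj xs)"
  by (induction xs rule: remdups_adj.induct) (auto simp: inj_on_def)

lemma sorted_remdups_adj_strict:
  "sorted (r::nat list) \<Longrightarrow> sorted_wrt (<) (remdups_adj r)"
proof (induction r rule: remdups_adj.induct)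
  case (3 x y xs)
  have s: "sorted_wrt (<) (remdups_adj (y # xs))" using 3 by (cases "x = y") auto
  show ?case
  proof (cases "x = y")
    case True then show ?thesis using s by simp
  next
    case False
    have "x < y" using 3(3) False by simp
    moreover have "\<forall>z\<in>set (y#xs). y \<le> z" using 3(3) by simp
    ultimately show ?thesis using s False by auto
  qed
qed auto

lemma sorted_wrt_comparable:
  assumes "sorted_wrt R cs" "x \<in> set cs" "y \<in> set cs" "x \<noteq> y"
  shows "R x y \<or> R y x"
proof -
  obtain i j where "i < length cs" "j < length cs" "cs ! i = x" "cs ! j = y"
    using assms by (auto simp: in_set_conv_nth)
  then show ?thesis using assms sorted_wrt_nth_less[OF assms(1)]
    by (metis linorder_neqE_nat)
qed

lemma rank_strict_mono:
  assumes fin: "finite P" and po: "is_poset P le"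
    and cov: "\<forall>x y. covers P le x y \<longrightarrow> rk y = rk x + 1"
  shows "x \<in> P \<Longrightarrow> y \<in> P \<Longrightarrow> lt_on le x y \<Longrightarrow> rk x < (rk y::nat)"
proof (induction "card {z\<in>P. lt_on le x z \<and> le z y}" arbitrary: x y rule: less_induct)
  case less
  show ?case
  proof (cases "covers P le x y")
    case True then show ?thesis using cov by auto
  next
    case False
    then obtain z where z: "z \<in> P" "lt_on le x z" "lt_on le z y"
      using less.prems unfolding covers_def by auto
    have s1: "{w\<in>P. lt_on le x w \<and> le w z} \<subset> {w\<in>P. lt_on le x w \<and> le w y}"
    proof
      show "{w\<in>P. lt_on le x w \<and> le w z} \<subseteq> {w\<in>P. lt_on le x w \<and> le w y}"
        using po z less.prems unfolding is_poset_def lt_on_def by blast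
      have "y \<notin> {w\<in>P. lt_on le x w \<and> le w z}"
        using po z less.prems unfolding is_poset_def lt_on_def by blast
      moreover have "y \<in> {w\<in>P. lt_on le x w \<and> le w y}"
        using po less.prems unfolding is_poset_def lt_on_def by blast
      ultimately show "{w\<in>P. lt_on le x w \<and> le w z} \<noteq> {w\<in>P. lt_on le x w \<and> le w y}"
        by blast
    qed
    have s2: "{w\<in>P. lt_on le z w \<and> le w y} \<subset> {w\<in>P. lt_on le x w \<and> le w y}"
    proof
      show "{w\<in>P. lt_on le z w \<and> le w y} \<subseteq> {w\<in>P. lt_on le x w \<and> le w y}"
        using po z less.prems unfolding is_poset_def lt_on_def by blast
      have "z \<notin> {w\<in>P. lt_on le z w \<and> le w y}"
        unfolding lt_on_def by blast
      moreover have "z \<in> {w\<in>P. lt_on le x w \<and> le w y}"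
        using z unfolding lt_on_def by blast
      ultimately show "{w\<in>P. lt_on le z w \<and> le w y} \<noteq> {w\<in>P. lt_on le x w \<and> le w y}"
        by blast
    qed
    have "rk x < rk z"
      using less.hyps[OF psubset_card_mono[OF _ s1]] fin less.prems z by auto
    moreover have "rk z < rk y"
      using less.hyps[OF psubset_card_mono[OF _ s2]] fin less.prems z by auto
    ultimately show ?thesis by simp
  qed
qed


lemma mc_sorted_wrt:
  assumes po: "is_poset P le" and es: "es \<in> multichains P le m"
  shows "sorted_wrt le es"
proof -
  have "successively le es" using es unfolding multichains_def successively_conv_nth by auto
  moreover have "set es \<subseteq> P" using es unfolding multichains_def by auto
  ultimately show ?thesis
    using po unfolding is_poset_def
    by (subst successively_iff_sorted_wrt_strong[symmetric]) blast+
qed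

lemma count_lemma:
  assumes po: "is_poset P le"
    and mono: "\<forall>x\<in>P. \<forall>y\<in>P. lt_on le x y \<longrightarrow> rk x < (rk y::nat)"
    and r: "sorted r" and lr: "length r = m"
  shows "card {es \<in> multichains P le m. map rk es = r} = flag_f P le rk (remdups_adj r)"
proof -
  define M where "M = {es \<in> multichains P le m. map rk es = r}"
  define F where "F = {cs. length cs = length (remdups_adj r) \<and> set cs \<subseteq> P \<and>
       sorted_wrt (lt_on le) cs \<and> map rk cs = remdups_adj r}"
  have refl: "\<And>x. x \<in> P \<Longrightarrow> le x x" using po unfolding is_poset_def by blast
  have leq: "\<And>x y. x \<in> P \<Longrightarrow> y \<in> P \<Longrightarrow> le x y \<Longrightarrow> rk x = rk y \<Longrightarrow> x = y"
    using mono unfolding lt_on_def by fastforce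
  have leq2: "\<And>x y. x \<in> P \<Longrightarrow> y \<in> P \<Longrightarrow> le x y \<Longrightarrow> rk x \<le> rk y"
    using mono unfolding lt_on_def by fastforce
  have injes: "inj_on rk (set es)" if "es \<in> multichains P le m" for es
  proof (rule inj_onI)
    fix x y assume xy: "x \<in> set es" "y \<in> set es" "rk x = rk y"
    have sP: "set es \<subseteq> P" using that unfolding multichains_def by auto
    have s: "sorted_wrt le es" using mc_sorted_wrt[OF po that] .
    show "x = y"
    proof (rule ccontr)
      assume "x \<noteq> y"
      then have "le x y \<or> le y x" using sorted_wrt_comparable[OF s xy(1,2)] by blast
      then show False using leq sP xy \<open>x \<noteq> y\<close> by (metis subsetD)
    qed
  qed
  have sortchain: "sorted_wrt (lt_on le) cs"
    if cP: "set cs \<subseteq> P" and cc: "\<forall>x\<in>set cs. \<forall>y\<in>set cs. le x y \<or> le y x"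
       "sorted_wrt (<) (map rk cs)" for cs
  proof -
    have "lt_on le (cs ! i) (cs ! j)" if ij: "i < j" "j < length cs" for i j
    proof -
      have lt: "rk (cs ! i) < rk (cs ! j)"
        using sorted_wrt_nth_less[OF \<open>sorted_wrt (<) (map rk cs)\<close>, of i j] ij by simp
      have in1: "cs ! i \<in> set cs" "cs ! j \<in> set cs" using ij by auto
      then have "le (cs ! i) (cs ! j) \<or> le (cs ! j) (cs ! i)" using cc by blast
      then show ?thesis using lt leq2 in1 cP unfolding lt_on_def
        by (metis less_le_not_le subsetD)
    qed
    then show ?thesis by (simp add: sorted_wrt_iff_nth_less)
  qed
  have rs: "sorted_wrt (<) (remdups_adj r)" using sorted_remdups_adj_strict[OF r] .
  have inj: "inj_on remdups_adj M"
  proof (rule inj_onI)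
    fix es1 es2 assume e: "es1 \<in> M" "es2 \<in> M" "remdups_adj es1 = remdups_adj es2"
    have m1: "es1 \<in> multichains P le m" and m2: "es2 \<in> multichains P le m"
      and r1: "map rk es1 = r" and r2: "map rk es2 = r" using e unfolding M_def by auto
    have st: "set es1 = set es2" using e(3) by (metis remdups_adj_set)
    have "es1 = map (the_inv_into (set es1) rk) (map rk es1)"
      using injes[OF m1] by (simp add: the_inv_into_f_f map_idI)
    also have "\<dots> = map (the_inv_into (set es2) rk) (map rk es2)" using st r1 r2 by simp
    also have "\<dots> = es2"
      using injes[OF m2] by (simp add: the_inv_into_f_f map_idI)
    finally show "es1 = es2" .
  qed
  have img1: "remdups_adj ` M \<subseteq> F"
  proof
    fix cs assume "cs \<in> remdups_adj ` M"
    then obtain es where es: "es \<in> M" and cs: "cs = remdups_adj es" by auto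
    have me: "es \<in> multichains P le m" and re: "map rk es = r" using es unfolding M_def by auto
    have sP: "set es \<subseteq> P" using me unfolding multichains_def by auto
    have mr: "map rk cs = remdups_adj r"
      using remdups_adj_map_inj_on[OF injes[OF me]] cs re by simp
    have s: "sorted_wrt le es" using mc_sorted_wrt[OF po me] .
    have comp: "\<forall>x\<in>set cs. \<forall>y\<in>set cs. le x y \<or> le y x"
      using cs sorted_wrt_comparable[OF s] refl sP by auto
    have "length cs = length (remdups_adj r)" using mr by (metis length_map)
    then show "cs \<in> F" unfolding F_def using mr comp sP cs sortchain[of cs] rs by auto
  qed
  have img2: "F \<subseteq> remdups_adj ` M"
  proof
    fix cs assume "cs \<in> F"
    then have len: "length cs = length (remdups_adj r)" and sP: "set cs \<subseteq> P"
      and sc: "sorted_wrt (lt_on le) cs" and mr: "map rk cs = remdups_adj r"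
      unfolding F_def by auto
    have "distinct (map rk cs)" using rs mr strict_sorted_iff by metis
    then have ic: "inj_on rk (set cs)" by (simp add: distinct_map)
    define g where "g = the_inv_into (set cs) rk"
    have setr: "set r = rk ` set cs" using mr by (metis remdups_adj_set set_map)
    have ig: "inj_on g (set r)" unfolding g_def setr using ic
      by (simp add: inj_on_the_inv_into)
    have gin: "\<And>x. x \<in> set r \<Longrightarrow> g x \<in> set cs" unfolding g_def setr using ic
      by (auto simp: the_inv_into_f_f)
    have rkg: "\<And>x. x \<in> set r \<Longrightarrow> rk (g x) = x" unfolding g_def setr using ic
      by (auto simp: the_inv_into_f_f)
    define es where "es = map g r"
    have mes: "map rk es = r" unfolding es_def by (simp add: map_idI rkg)
    have res: "remdups_adj es = cs"
    proof -
      have "remdups_adj es = map g (remdups_adj r)"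
        unfolding es_def using remdups_adj_map_inj_on[OF ig] .
      also have "\<dots> = map g (map rk cs)" using mr by simp
      also have "\<dots> = cs" unfolding g_def using ic by (simp add: map_idI the_inv_into_f_f)
      finally show ?thesis .
    qed
    have esP: "set es \<subseteq> P" unfolding es_def using gin sP by auto
    have chain: "le (es ! i) (es ! Suc i)" if i: "Suc i < length es" for i
    proof -
      have ri: "r ! i \<le> r ! Suc i" using r i unfolding es_def
        by (simp add: sorted_iff_nth_mono)
      have ini: "r ! i \<in> set r" "r ! Suc i \<in> set r" using i unfolding es_def by auto
      have e1: "es ! i = g (r ! i)" "es ! Suc i = g (r ! Suc i)" using i unfolding es_def by auto
      show ?thesis
      proof (cases "g (r ! i) = g (r ! Suc i)")
        case True then show ?thesis using e1 refl gin ini sP by auto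
      next
        case False
        then have "lt_on le (g (r ! i)) (g (r ! Suc i)) \<or> lt_on le (g (r ! Suc i)) (g (r ! i))"
          using sorted_wrt_comparable[OF sc gin[OF ini(1)] gin[OF ini(2)]] by blast
        moreover have "\<not> lt_on le (g (r ! Suc i)) (g (r ! i))"
          using mono gin ini sP rkg ri by (metis leD subsetD)
        ultimately show ?thesis using e1 unfolding lt_on_def by auto
      qed
    qed
    have "length es = m" unfolding es_def using lr by simp
    then have "es \<in> M" unfolding M_def multichains_def using esP chain mes by auto
    then show "cs \<in> remdups_adj ` M" using res by auto
  qed
  have "bij_betw remdups_adj M F" using inj img1 img2 by (simp add: bij_betw_def)
  then show ?thesis unfolding M_def F_def flag_f_def by (simp add: bij_betw_same_card)
qed


lemma sum_formula:
  assumes fin: "finite P" and po: "is_poset P le"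
    and mono: "\<forall>x\<in>P. \<forall>y\<in>P. lt_on le x y \<longrightarrow> rk x < (rk y::nat)"
    and N: "\<forall>x\<in>P. rk x \<le> N"
  shows "(\<Sum>es\<in>multichains P le m. qvar ^ sum_list (map rk es)) =
    (\<Sum>r\<in>{r::nat list. length r = m \<and> sorted r \<and> set r \<subseteq> {..N}}.
        of_nat (flag_f P le rk (remdups_adj r)) * qvar ^ sum_list r)"
proof -
  define R where "R = {r::nat list. length r = m \<and> sorted r \<and> set r \<subseteq> {..N}}"
  have fR: "finite R"
    by (rule finite_subset[OF _ finite_lists_length_eq[OF finite_atMost, of N m]])
       (auto simp: R_def)
  have fS: "finite (multichains P le m)"
    by (rule finite_subset[OF _ finite_lists_length_eq[OF fin, of m]])
       (auto simp: multichains_def)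
  have leq2: "\<And>x y. x \<in> P \<Longrightarrow> y \<in> P \<Longrightarrow> le x y \<Longrightarrow> rk x \<le> rk y"
    using mono unfolding lt_on_def by fastforce
  have img: "map rk ` multichains P le m \<subseteq> R"
  proof
    fix r assume "r \<in> map rk ` multichains P le m"
    then obtain es where es: "es \<in> multichains P le m" and r: "r = map rk es" by auto
    have sP: "set es \<subseteq> P" and l: "length es = m" using es unfolding multichains_def by auto
    have "sorted_wrt le es" using mc_sorted_wrt[OF po es] .
    then have "sorted_wrt (\<lambda>x y. rk x \<le> rk y) es"
      by (rule sorted_wrt_mono_rel[rotated]) (use sP leq2 in auto)
    then have "sorted r" unfolding r by (simp add: sorted_wrt_map)
    then show "r \<in> R" using sP N l unfolding R_def r by auto
  qed
  have "(\<Sum>es\<in>multichains P le m. qvar ^ sum_list (map rk es)) =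
      (\<Sum>r\<in>R. \<Sum>es\<in>{x \<in> multichains P le m. map rk x = r}. qvar ^ sum_list (map rk es))"
    using sum.group[OF fS fR img, of "\<lambda>es. qvar ^ sum_list (map rk es)"] by (simp only:)
  also have "\<dots> = (\<Sum>r\<in>R. of_nat (flag_f P le rk (remdups_adj r)) * qvar ^ sum_list r)"
  proof (rule sum.cong[OF refl])
    fix r assume "r \<in> R"
    then have "sorted r" "length r = m" unfolding R_def by auto
    have "(\<Sum>es\<in>{x \<in> multichains P le m. map rk x = r}. qvar ^ sum_list (map rk es)) =
       (\<Sum>es\<in>{x \<in> multichains P le m. map rk x = r}. qvar ^ sum_list r)"
      by (rule sum.cong) auto
    also have "\<dots> = of_nat (card {x \<in> multichains P le m. map rk x = r}) * qvar ^ sum_list r"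
      by simp
    also have "\<dots> = of_nat (flag_f P le rk (remdups_adj r)) * qvar ^ sum_list r"
      using count_lemma[OF po mono \<open>sorted r\<close> \<open>length r = m\<close>] by simp
    finally show "(\<Sum>es\<in>{x \<in> multichains P le m. map rk x = r}. qvar ^ sum_list (map rk es)) =
       of_nat (flag_f P le rk (remdups_adj r)) * qvar ^ sum_list r" .
  qed
  finally show ?thesis unfolding R_def .
qed

theorem mainTheorem20:
  fixes P :: "'a set" and le :: "'a \<Rightarrow> 'a \<Rightarrow> bool" and rk :: "'a \<Rightarrow> nat"
    and P' :: "'b set" and le' :: "'b \<Rightarrow> 'b \<Rightarrow> bool" and rk' :: "'b \<Rightarrow> nat"
  assumes "finite P" and "is_poset P le" and "graded P le" and "is_rank_fun P le rk"
    and "finite P'" and "is_poset P' le'" and "graded P' le'" and "is_rank_fun P' le' rk'"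
    and "\<forall>a :: nat list. sorted_wrt (<) a \<longrightarrow> flag_f P le rk a = flag_f P' le' rk' a"
  shows "qZeta P le rk = qZeta P' le' rk'"
proof -
  have mono1: "\<forall>x\<in>P. \<forall>y\<in>P. lt_on le x y \<longrightarrow> rk x < rk y"
    using rank_strict_mono[OF assms(1,2)] assms(4) unfolding is_rank_fun_def by blast
  have mono2: "\<forall>x\<in>P'. \<forall>y\<in>P'. lt_on le' x y \<longrightarrow> rk' x < rk' y"
    using rank_strict_mono[OF assms(5,6)] assms(8) unfolding is_rank_fun_def by blast
  define N where "N = Max (rk ` P) + Max (rk' ` P')"
  have N1: "\<forall>x\<in>P. rk x \<le> N" unfolding N_def using assms(1)
    by (metis Max_ge finite_imageI image_eqI trans_le_add1)
  have N2: "\<forall>x\<in>P'. rk' x \<le> N" unfolding N_def using assms(5)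
    by (metis Max_ge finite_imageI image_eqI trans_le_add2)
  have eq: "(\<Sum>es\<in>multichains P le m. qvar ^ sum_list (map rk es)) =
            (\<Sum>es\<in>multichains P' le' m. qvar ^ sum_list (map rk' es))" for m
  proof -
    have "(\<Sum>r\<in>{r::nat list. length r = m \<and> sorted r \<and> set r \<subseteq> {..N}}.
        of_nat (flag_f P le rk (remdups_adj r)) * qvar ^ sum_list r) =
        (\<Sum>r\<in>{r::nat list. length r = m \<and> sorted r \<and> set r \<subseteq> {..N}}.
        of_nat (flag_f P' le' rk' (remdups_adj r)) * qvar ^ sum_list r)"
      using assms(9) sorted_remdups_adj_strict by (intro sum.cong) auto
    then show ?thesis
      using sum_formula[OF assms(1,2) mono1 N1, of m] sum_formula[OF assms(5,6) mono2 N2, of m]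
      by simp
  qed
  have "is_qZeta P le rk = is_qZeta P' le' rk'"
    unfolding is_qZeta_def using eq by (intro ext) simp
  then show ?thesis unfolding qZeta_def by simp
qed

end
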